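(* Let $\mathcal{H}=(\mathcal{V},\mathcal{E})$ be a PICOD hypergraph and suppose $\mathcal{V}$ is partitioned into the vertex sets $\mathcal{V}_1,\dots,\mathcal{V}_t$ of the connected components $\mathcal{H}_1=\mathcal{H}[\mathcal{V}_1],\dots,\mathcal{H}_t=\mathcal{H}[\mathcal{V}_t]$ of $\mathcal{H}$ (so every edge of $\mathcal{H}$ is contained in exactly one $\mathcal{V}_i$ and $\mathcal{H}=\bigcup_i \mathcal{H}_i$). Then for every prime power $q$, $$\beta_q(\mathcal{H})=\max_{i\in[t]}\beta_q(\mathcal{H}_i).$$
   Context: PICOD problem: a server holds $m$ messages $b_1,\dots,b_m\in\mathbb{F}_q$; there are $n$ clients, client $i$ having side-information $\{b_j: j\in S_i\}$, $S_i\subseteq[m]$, and request-set $R_i=[m]\setminus S_i$ (assumed non-empty); client $i$ wants any one message $b_j$ with $j\in R_i$. A PICOD scheme of length $\ell$ over $\mathbb{F}_q$ is an encoding map $\phi:\mathbb{F}_q^m\to\mathbb{F}_q^\ell$ (the $\ell$ broadcast symbols) such that for every client $i$ there is an index $j_i\in R_i$ and a function $\psi_i$ with $\psi_i(\phi(b),(b_k)_{k\in S_i})=b_{j_i}$ for all $b\in\mathbb{F}_q^m$. The PICOD hypergraph $\mathcal{H}$ has vertex set $[m]$ and edge set $\{R_i: i\in[n]\}$; every hypergraph defines a PICOD problem in this way. $\beta_q(\mathcal{H})$ is the minimum length of a PICOD scheme for $\mathcal{H}$ over $\mathbb{F}_q$ (equal to $0$ if there are no edges). For $\mathcal{S}\subseteq\mathcal{V}$,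 $\mathcal{H}[\mathcal{S}]$ is the hypergraph with vertex set $\mathcal{S}$ and edges $\{E\in\mathcal{E}: E\subseteq \mathcal{S}\}$. Two vertices are adjacent if some edge contains both. *)

theory Defs
  imports "HOL-Library.FuncSet"
begin

text \<open>A PICOD hypergraph: finite vertex set V (message indices), edge set E
(request sets), every edge a non-empty subset of V. Client with request set R
has side information V - R.\<close>

definition picod_hypergraph :: "'v set \<Rightarrow> 'v set set \<Rightarrow> bool" where
  "picod_hypergraph V E \<longleftrightarrow> finite V \<and> (\<forall>R\<in>E. R \<noteq> {} \<and> R \<subseteq> V)"

text \<open>Message vectors are the functions V \<rightarrow> F (extensional, i.e. undefined
outside V).\<close>

definition picod_scheme ::
  "'v set \<Rightarrow> 'v set set \<Rightarrow> nat \<Rightarrow> (('v \<Rightarrow> 'a) \<Rightarrow> 'a list) \<Rightarrow> bool" where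
  "picod_scheme V E l \<phi> \<longleftrightarrow>
     (\<forall>b \<in> V \<rightarrow>\<^sub>E UNIV. length (\<phi> b) = l) \<and>
     (\<forall>R\<in>E. \<exists>j\<in>R. \<exists>\<psi> :: 'a list \<Rightarrow> ('v \<Rightarrow> 'a) \<Rightarrow> 'a.
        \<forall>b \<in> V \<rightarrow>\<^sub>E UNIV. \<psi> (\<phi> b) (restrict b (V - R)) = b j)"

definition picod_beta :: "'a::{finite,field} itself \<Rightarrow> 'v set \<Rightarrow> 'v set set \<Rightarrow> nat" where
  "picod_beta _ V E = (LEAST l. \<exists>\<phi> :: ('v \<Rightarrow> 'a) \<Rightarrow> 'a list. picod_scheme V E l \<phi>)"

definition induced_edges :: "'v set set \<Rightarrow> 'v set \<Rightarrow> 'v set set" where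
  "induced_edges E S = {R \<in> E. R \<subseteq> S}"

definition hg_adjacent :: "'v set set \<Rightarrow> 'v \<Rightarrow> 'v \<Rightarrow> bool" where
  "hg_adjacent E u v \<longleftrightarrow> (\<exists>R\<in>E. u \<in> R \<and> v \<in> R)"

definition hg_components :: "'v set \<Rightarrow> 'v set set \<Rightarrow> 'v set set" where
  "hg_components V E = {{v \<in> V. (hg_adjacent E)\<^sup>*\<^sup>* u v} | u. u \<in> V}"

end

theory Submission
  imports Defs
begin

lemma scheme_exists:
  assumes "finite V" "\<forall>R\<in>E. R \<noteq> {} \<and> R \<subseteq> V"
  shows "\<exists>l \<phi>::('v \<Rightarrow> 'a) \<Rightarrow> 'a list. picod_scheme V E l \<phi>"
proof -
  obtain xs where xs: "set xs = V" using finite_list[OF assms(1)] by blast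
  have "picod_scheme V E (length xs) (\<lambda>b::'v \<Rightarrow> 'a. map b xs)"
    unfolding picod_scheme_def
  proof (intro conjI ballI)
    fix b :: "'v \<Rightarrow> 'a" assume "b \<in> V \<rightarrow>\<^sub>E UNIV" show "length (map b xs) = length xs" by simp
  next
    fix R assume R: "R \<in> E"
    then obtain j where j: "j \<in> R" using assms(2) by blast
    then have "j \<in> set xs" using R assms(2) xs by blast
    then obtain i where i: "i < length xs" "xs ! i = j" by (metis in_set_conv_nth)
    show "\<exists>j\<in>R. \<exists>\<psi> :: 'a list \<Rightarrow> ('v \<Rightarrow> 'a) \<Rightarrow> 'a.
        \<forall>b \<in> V \<rightarrow>\<^sub>E UNIV. \<psi> (map b xs) (restrict b (V - R)) = b j"
      using i j by (intro bexI[of _ j] exI[of _ "\<lambda>w s. w ! i"]) auto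
  qed
  then show ?thesis by blast
qed

lemma beta_spec:
  assumes "finite V" "\<forall>R\<in>E. R \<noteq> {} \<and> R \<subseteq> V"
  shows "\<exists>\<phi>::('v \<Rightarrow> 'a::{finite,field}) \<Rightarrow> 'a list. picod_scheme V E (picod_beta TYPE('a) V E) \<phi>"
proof -
  from scheme_exists[OF assms] obtain l and \<phi> :: "('v \<Rightarrow> 'a) \<Rightarrow> 'a list"
    where "picod_scheme V E l \<phi>" by blast
  then show ?thesis unfolding picod_beta_def using LeastI_ex[of "\<lambda>l. Ex (picod_scheme V E l)"] by blast
qed

lemma beta_le:
  assumes "picod_scheme V E l (\<phi>::('v \<Rightarrow> 'a::{finite,field}) \<Rightarrow> 'a list)"
  shows "picod_beta TYPE('a) V E \<le> l"
  unfolding picod_beta_def using assms by (intro Least_le) blast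

lemma restrict_scheme:
  assumes "C \<subseteq> V" "picod_scheme V E l (\<phi>::('v \<Rightarrow> 'a::{finite,field}) \<Rightarrow> 'a list)"
  shows "picod_scheme C (induced_edges E C) l
           (\<lambda>b'. \<phi> (\<lambda>v. if v \<in> C then b' v else if v \<in> V then 0 else undefined))"
  unfolding picod_scheme_def
proof (intro conjI ballI)
  fix b' :: "'v \<Rightarrow> 'a" assume "b' \<in> C \<rightarrow>\<^sub>E UNIV"
  have "(\<lambda>v. if v \<in> C then b' v else if v \<in> V then 0 else undefined) \<in> V \<rightarrow>\<^sub>E UNIV"
    using assms(1) by auto
  then show "length (\<phi> (\<lambda>v. if v \<in> C then b' v else if v \<in> V then 0 else undefined)) = l"
    using assms(2) unfolding picod_scheme_def by blast
next
  fix R assume R: "R \<in> induced_edges E C"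
  then have RE: "R \<in> E" and RC: "R \<subseteq> C" unfolding induced_edges_def by auto
  from RE assms(2) obtain j \<psi> where j: "j \<in> R"
    and \<psi>: "\<forall>b \<in> V \<rightarrow>\<^sub>E UNIV. (\<psi>::'a list \<Rightarrow> ('v \<Rightarrow> 'a) \<Rightarrow> 'a) (\<phi> b) (restrict b (V - R)) = b j"
    unfolding picod_scheme_def by blast
  show "\<exists>j\<in>R. \<exists>\<psi> :: 'a list \<Rightarrow> ('v \<Rightarrow> 'a) \<Rightarrow> 'a.
        \<forall>b' \<in> C \<rightarrow>\<^sub>E UNIV. \<psi> (\<phi> (\<lambda>v. if v \<in> C then b' v else if v \<in> V then 0 else undefined)) (restrict b' (C - R)) = b' j"
  proof (intro bexI[OF _ j] exI[of _ "\<lambda>w s. \<psi> w (\<lambda>v. if v \<in> V - R then (if v \<in> C then s v else 0) else undefined)"] ballI)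
    fix b' :: "'v \<Rightarrow> 'a" assume b': "b' \<in> C \<rightarrow>\<^sub>E UNIV"
    define b where "b = (\<lambda>v. if v \<in> C then b' v else if v \<in> V then 0 else undefined)"
    have bV: "b \<in> V \<rightarrow>\<^sub>E UNIV" using assms(1) unfolding b_def by auto
    have eq: "(\<lambda>v. if v \<in> V - R then (if v \<in> C then restrict b' (C - R) v else 0) else undefined)
              = restrict b (V - R)"
      unfolding b_def restrict_def by (rule ext) auto
    show "\<psi> (\<phi> (\<lambda>v. if v \<in> C then b' v else if v \<in> V then 0 else undefined))
          (\<lambda>v. if v \<in> V - R then (if v \<in> C then restrict b' (C - R) v else 0) else undefined) = b' j"
      unfolding eq using \<psi> bV j RC unfolding b_def by auto
  qed
qed

lemma adj_sym: "(hg_adjacent E)\<^sup>*\<^sup>* a b \<Longrightarrow> (hg_adjacent E)\<^sup>*\<^sup>* b a"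
proof (induction rule: rtranclp_induct)
  case base then show ?case by simp
next
  case (step y z)
  have "hg_adjacent E z y" using step(2) unfolding hg_adjacent_def by blast
  then show ?case using step(3) by (rule converse_rtranclp_into_rtranclp)
qed

lemma comp_sub: "C \<in> hg_components V E \<Longrightarrow> C \<subseteq> V"
  unfolding hg_components_def by auto

lemma comp_edge:
  assumes "R \<in> E" "R \<noteq> {}" "R \<subseteq> V"
  shows "\<exists>C\<in>hg_components V E. R \<subseteq> C"
proof -
  obtain u where u: "u \<in> R" using assms by blast
  have "R \<subseteq> {v \<in> V. (hg_adjacent E)\<^sup>*\<^sup>* u v}"
  proof
    fix v assume "v \<in> R"
    then have "hg_adjacent E u v" using u assms(1) unfolding hg_adjacent_def by blast
    then show "v \<in> {v \<in> V. (hg_adjacent E)\<^sup>*\<^sup>* u v}" using \<open>v \<in> R\<close> assms(3) by auto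
  qed
  moreover have "{v \<in> V. (hg_adjacent E)\<^sup>*\<^sup>* u v} \<in> hg_components V E"
    unfolding hg_components_def using u assms(3) by blast
  ultimately show ?thesis by blast
qed

lemma comp_disj:
  assumes "C1 \<in> hg_components V E" "C2 \<in> hg_components V E" "C1 \<noteq> C2"
  shows "C1 \<inter> C2 = {}"
proof (rule ccontr)
  assume "C1 \<inter> C2 \<noteq> {}"
  then obtain x where x: "x \<in> C1" "x \<in> C2" by blast
  from assms(1) obtain u1 where c1: "C1 = {v \<in> V. (hg_adjacent E)\<^sup>*\<^sup>* u1 v}"
    unfolding hg_components_def by blast
  from assms(2) obtain u2 where c2: "C2 = {v \<in> V. (hg_adjacent E)\<^sup>*\<^sup>* u2 v}"
    unfolding hg_components_def by blast
  have a1: "(hg_adjacent E)\<^sup>*\<^sup>* u1 x" and a2: "(hg_adjacent E)\<^sup>*\<^sup>* u2 x" using x c1 c2 by auto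
  have "(hg_adjacent E)\<^sup>*\<^sup>* u1 u2" using a1 adj_sym[OF a2] by simp
  moreover have "(hg_adjacent E)\<^sup>*\<^sup>* u2 u1" using a2 adj_sym[OF a1] by simp
  ultimately have "C1 = C2" unfolding c1 c2 by (auto intro: rtranclp_trans)
  then show False using assms(3) by simp
qed

definition pad :: "'a::zero list \<Rightarrow> nat \<Rightarrow> 'a" where
  "pad xs k = (if k < length xs then xs ! k else 0)"

lemma map_pad: "length xs = n \<Longrightarrow> map (pad xs) [0..<n] = xs"
  by (rule nth_equalityI) (auto simp: pad_def)

lemma upper:
  fixes V :: "'v set" and E :: "'v set set"
  assumes hg: "picod_hypergraph V E"
  defines "K \<equiv> hg_components V E"
  defines "\<beta> \<equiv> (\<lambda>C. picod_beta TYPE('a::{finite,field}) C (induced_edges E C))"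
  shows "\<exists>\<phi>::('v \<Rightarrow> 'a) \<Rightarrow> 'a list. picod_scheme V E (Max (\<beta> ` K)) \<phi>"
proof -
  have finV: "finite V" and edges: "\<forall>R\<in>E. R \<noteq> {} \<and> R \<subseteq> V"
    using hg unfolding picod_hypergraph_def by auto
  have finK: "finite K" unfolding K_def hg_components_def using finV by simp
  define L where "L = Max (\<beta> ` K)"
  have comp_ok: "\<exists>\<phi>::('v \<Rightarrow> 'a) \<Rightarrow> 'a list. picod_scheme C (induced_edges E C) (\<beta> C) \<phi>"
    if "C \<in> K" for C
  proof -
    have "C \<subseteq> V" using that comp_sub unfolding K_def by blast
    then have "finite C" using finV finite_subset by blast
    moreover have "\<forall>R\<in>induced_edges E C. R \<noteq> {} \<and> R \<subseteq> C"
      using edges unfolding induced_edges_def by auto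
    ultimately show ?thesis unfolding \<beta>_def by (rule beta_spec)
  qed
  define F where "F C = (SOME \<phi>::('v \<Rightarrow> 'a) \<Rightarrow> 'a list. picod_scheme C (induced_edges E C) (\<beta> C) \<phi>)" for C
  have F: "picod_scheme C (induced_edges E C) (\<beta> C) (F C)" if "C \<in> K" for C
    unfolding F_def using comp_ok[OF that] by (rule someI_ex)
  define enc where "enc b = map (\<lambda>k. \<Sum>C\<in>K. pad (F C (restrict b C)) k) [0..<L]" for b :: "'v \<Rightarrow> 'a"
  have "picod_scheme V E L enc"
    unfolding picod_scheme_def
  proof (intro conjI ballI)
    fix b :: "'v \<Rightarrow> 'a" assume "b \<in> V \<rightarrow>\<^sub>E UNIV"
    show "length (enc b) = L" unfolding enc_def by simp
  next
    fix R assume R: "R \<in> E"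
    obtain C0 where C0: "C0 \<in> K" "R \<subseteq> C0" using comp_edge[of R E V] R edges unfolding K_def by blast
    have RI: "R \<in> induced_edges E C0" using R C0 unfolding induced_edges_def by auto
    have C0V: "C0 \<subseteq> V" using C0 comp_sub unfolding K_def by blast
    from F[OF C0(1)] RI obtain j \<psi> where j: "j \<in> R"
      and \<psi>: "\<forall>b \<in> C0 \<rightarrow>\<^sub>E UNIV. (\<psi>::'a list \<Rightarrow> ('v \<Rightarrow> 'a) \<Rightarrow> 'a) (F C0 b) (restrict b (C0 - R)) = b j"
      unfolding picod_scheme_def by blast
    have bC0: "\<beta> C0 \<le> L" unfolding L_def using finK C0(1) by simp
    define \<psi>' where "\<psi>' w s = \<psi> (take (\<beta> C0) (map (\<lambda>k. w ! k - (\<Sum>C\<in>K-{C0}. pad (F C (restrict s C)) k)) [0..<L]))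
                              (restrict s (C0 - R))" for w s
    show "\<exists>j\<in>R. \<exists>\<psi> :: 'a list \<Rightarrow> ('v \<Rightarrow> 'a) \<Rightarrow> 'a.
        \<forall>b \<in> V \<rightarrow>\<^sub>E UNIV. \<psi> (enc b) (restrict b (V - R)) = b j"
    proof (intro bexI[OF _ j] exI[of _ \<psi>'] ballI)
      fix b :: "'v \<Rightarrow> 'a" assume b: "b \<in> V \<rightarrow>\<^sub>E UNIV"
      have r1: "restrict (restrict b (V - R)) C = restrict b C" if "C \<in> K - {C0}" for C
      proof -
        have "C \<subseteq> V" using that comp_sub unfolding K_def by blast
        moreover have "C \<inter> C0 = {}" using that C0(1) comp_disj unfolding K_def by blast
        ultimately have "C \<subseteq> V - R" using C0(2) by blast
        then show ?thesis unfolding restrict_def by (rule_tac ext) auto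
      qed
      have r2: "restrict (restrict b (V - R)) (C0 - R) = restrict (restrict b C0) (C0 - R)"
        using C0V unfolding restrict_def by (rule_tac ext) auto
      have lenF: "length (F C0 (restrict b C0)) = \<beta> C0"
        using F[OF C0(1)] unfolding picod_scheme_def by auto
      have sumsplit: "(\<Sum>C\<in>K. pad (F C (restrict b C)) k) =
           pad (F C0 (restrict b C0)) k + (\<Sum>C\<in>K-{C0}. pad (F C (restrict b C)) k)" for k
        using finK C0(1) by (simp add: sum.remove)
      have m: "map (\<lambda>k. enc b ! k - (\<Sum>C\<in>K-{C0}. pad (F C (restrict (restrict b (V - R)) C)) k)) [0..<L]
             = map (pad (F C0 (restrict b C0))) [0..<L]"
        using r1 by (auto simp: enc_def sumsplit intro!: map_cong sum.cong)
      have t: "take (\<beta> C0) (map (pad (F C0 (restrict b C0))) [0..<L]) = F C0 (restrict b C0)"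
        using bC0 lenF by (simp add: take_map map_pad min_def)
      show "\<psi>' (enc b) (restrict b (V - R)) = b j"
      proof -
        have "restrict b C0 \<in> C0 \<rightarrow>\<^sub>E UNIV" by simp
        then have "\<psi> (F C0 (restrict b C0)) (restrict (restrict b C0) (C0 - R)) = restrict b C0 j"
          using \<psi> by blast
        then show ?thesis unfolding \<psi>'_def m t r2 using j C0(2) by auto
      qed
    qed
  qed
  then show ?thesis unfolding L_def by blast
qed

theorem proposition1:
  fixes V :: "'v set" and E :: "'v set set"
  assumes "picod_hypergraph V E" and "V \<noteq> {}"
  shows "picod_beta TYPE('a::{finite,field}) V E =
         Max ((\<lambda>C. picod_beta TYPE('a) C (induced_edges E C)) ` hg_components V E)"
proof (rule antisym)
  obtain \<phi> :: "('v \<Rightarrow> 'a) \<Rightarrow> 'a list" where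
    "picod_scheme V E (Max ((\<lambda>C. picod_beta TYPE('a) C (induced_edges E C)) ` hg_components V E)) \<phi>"
    using upper[OF assms(1)] by blast
  then show "picod_beta TYPE('a::{finite,field}) V E \<le>
         Max ((\<lambda>C. picod_beta TYPE('a) C (induced_edges E C)) ` hg_components V E)"
    by (rule beta_le)
next
  have finV: "finite V" and edges: "\<forall>R\<in>E. R \<noteq> {} \<and> R \<subseteq> V"
    using assms(1) unfolding picod_hypergraph_def by auto
  have finK: "finite (hg_components V E)" unfolding hg_components_def using finV by simp
  have neK: "hg_components V E \<noteq> {}" unfolding hg_components_def using assms(2) by blast
  obtain \<phi> :: "('v \<Rightarrow> 'a) \<Rightarrow> 'a list" where ph: "picod_scheme V E (picod_beta TYPE('a) V E) \<phi>"
    using beta_spec[OF finV edges] by blast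
  show "Max ((\<lambda>C. picod_beta TYPE('a) C (induced_edges E C)) ` hg_components V E)
        \<le> picod_beta TYPE('a::{finite,field}) V E"
  proof (subst Max_le_iff)
    show "\<forall>a\<in>(\<lambda>C. picod_beta TYPE('a) C (induced_edges E C)) ` hg_components V E.
          a \<le> picod_beta TYPE('a) V E"
    proof
      fix a assume "a \<in> (\<lambda>C. picod_beta TYPE('a) C (induced_edges E C)) ` hg_components V E"
      then obtain C where C: "C \<in> hg_components V E" and a: "a = picod_beta TYPE('a) C (induced_edges E C)" by blast
      show "a \<le> picod_beta TYPE('a) V E"
        unfolding a by (rule beta_le[OF restrict_scheme[OF comp_sub[OF C] ph]])
    qed
  qed (use finK neK in auto)
qed

end
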